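(* Let $N^h\ge 2$ be an integer, $h=1/N^h$, and let $\eta_K,\eta_M,\alpha$ be real parameters. Let $\mathbf{K}_s=\mathbf{K}-\eta_K\mathbf{S}$ and $\mathbf{M}_{gsq}=\alpha\mathbf{M}_G+(1-\alpha)\mathbf{M}_L+\eta_M\mathbf{S}_g$ be the $(N^h-1)\times(N^h-1)$ matrices described in the context. Then the generalized matrix eigenvalue problem $\mathbf{K}_{s}\mathbf{U}_{gsq}=\lambda^h_{gsq}\mathbf{M}_{gsq}\mathbf{U}_{gsq}$ has, for every $j\in\{1,\dots,N^h-1\}$, the eigenpair $(\lambda^h_{gsq,j},\mathbf{U}_{gsq,j})$ given by \[ \lambda_{gsq,j}^h=\frac{12}{h^2}\,\frac{\big(1-2\eta_K+2\eta_K\cos(t_j)\big)\sin^2(t_j/2)}{3+18\eta_M-\alpha+(\alpha-24\eta_M)\cos(t_j)+6\eta_M\cos(2t_j)},\qquad \mathbf{U}_{gsq,j,k}=c_j\sin(k t_j),\quad k=1,\dots,N^h-1, \] where $t_j:=j\pi h$, $\mathbf{U}_{gsq,j,k}$ is the $k$-th component of $\mathbf{U}_{gsq,j}$, and $c_j>0$ is a normalization constant.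
   Context: Setting (linear finite elements, generalized SoftFEM with blended quadrature, in 1D): Let $x_k=kh$, $k=0,\dots,N^h$, be a uniform mesh of $[0,1]$. Let $V^h$ be the space of continuous functions on $[0,1]$ that are affine on each $[x_{k-1},x_k]$ and vanish at $0$ and $1$, with hat basis $\phi_k$, $k=1,\dots,N^h-1$, $\phi_k(x_l)=\delta_{kl}$. For $v\in V^h$ and an interior node $x_k$ let $[\![v']\!](x_k)=v'(x_k^-)-v'(x_k^+)$. Define $a(v,w)=\int_0^1 v'w'\,dx$, $s(v,w)=\sum_{k=1}^{N^h-1} h\,[\![v']\!](x_k)[\![w']\!](x_k)$, $s_g(v,w)=\sum_{k=1}^{N^h-1} h^3\,[\![v']\!](x_k)[\![w']\!](x_k)$, $\mathbf{K}_{kl}=a(\phi_l,\phi_k)$, $\mathbf{S}_{kl}=s(\phi_l,\phi_k)$, $(\mathbf{S}_g)_{kl}=s_g(\phi_l,\phi_k)$. $\mathbf{M}_G$ is the mass matrix $\int_0^1\phi_l\phi_k\,dx$ computed elementwise by the 2-point Gauss–Legendre rule, and $\mathbf{M}_L$ the one computed by the 2-point Gauss–Lobatto (trapezoidal) rule. Explicitly, $\mathbf{K}=\frac1h\,\mathrm{tridiag}(-1,2,-1)$, $\mathbf{M}_G=h\,\mathrm{tridiag}(\tfrac16,\tfrac23,\tfrac16)$, $\mathbf{M}_L=h\,\mathbf{I}$, $\mathbf{S}=\frac1h$ times the symmetric pentadiagonal matrix with rows $(1,-4,6,-4,1)$ except that the first and last diagonal entries are $5$, and $\mathbf{S}_g=h^2\mathbf{S}$;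 all are $(N^h-1)\times(N^h-1)$. *)

theory Defs
  imports Complex_Main
begin

text \<open>Matrices are represented as functions nat => nat => real, indexed by
  k, l in {1..N-1}; vectors as nat => real indexed by {1..N-1}.
  Throughout, N stands for N^h and h = 1 / N.\<close>

definition meshsize :: "nat \<Rightarrow> real" where
  "meshsize N = 1 / real N"

text \<open>Jump of the derivative of the hat function phi_l at the interior node x_m:
  phi_l'(x_m^-) - phi_l'(x_m^+).\<close>
definition hat_jump :: "nat \<Rightarrow> nat \<Rightarrow> nat \<Rightarrow> real" where
  "hat_jump N l m = (1 / meshsize N) *
     (if m = l then 2 else if m = l + 1 \<or> l = m + 1 then -1 else 0)"

definition stiffK :: "nat \<Rightarrow> nat \<Rightarrow> nat \<Rightarrow> real" where
  "stiffK N k l = (1 / meshsize N) *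
     (if k = l then 2 else if k = l + 1 \<or> l = k + 1 then -1 else 0)"

definition massG :: "nat \<Rightarrow> nat \<Rightarrow> nat \<Rightarrow> real" where
  "massG N k l = meshsize N *
     (if k = l then 2/3 else if k = l + 1 \<or> l = k + 1 then 1/6 else 0)"

definition massL :: "nat \<Rightarrow> nat \<Rightarrow> nat \<Rightarrow> real" where
  "massL N k l = meshsize N * (if k = l then 1 else 0)"

text \<open>S_{kl} = s(phi_l, phi_k) = sum over interior nodes of h [phi_l'] [phi_k'].\<close>
definition stabS :: "nat \<Rightarrow> nat \<Rightarrow> nat \<Rightarrow> real" where
  "stabS N k l = (\<Sum>m = 1..N - 1. meshsize N * hat_jump N l m * hat_jump N k m)"

definition stabSg :: "nat \<Rightarrow> nat \<Rightarrow> nat \<Rightarrow> real" where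
  "stabSg N k l = (\<Sum>m = 1..N - 1. meshsize N ^ 3 * hat_jump N l m * hat_jump N k m)"

definition matKs :: "real \<Rightarrow> nat \<Rightarrow> nat \<Rightarrow> nat \<Rightarrow> real" where
  "matKs etaK N k l = stiffK N k l - etaK * stabS N k l"

definition matMgsq :: "real \<Rightarrow> real \<Rightarrow> nat \<Rightarrow> nat \<Rightarrow> nat \<Rightarrow> real" where
  "matMgsq alpha etaM N k l =
     alpha * massG N k l + (1 - alpha) * massL N k l + etaM * stabSg N k l"

definition matvec :: "nat \<Rightarrow> (nat \<Rightarrow> nat \<Rightarrow> real) \<Rightarrow> (nat \<Rightarrow> real) \<Rightarrow> nat \<Rightarrow> real" where
  "matvec N A u k = (\<Sum>l = 1..N - 1. A k l * u l)"

end

theory Submission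
  imports Defs
begin

definition T :: "real \<Rightarrow> real \<Rightarrow> nat \<Rightarrow> nat \<Rightarrow> real" where
  "T a b k l = (if k = l then a else if k = l + 1 \<or> l = k + 1 then b else 0)"

lemma T_sym: "T a b k l = T a b l k"
  unfolding T_def by auto

lemma T_split: "1 \<le> k \<Longrightarrow> T a b k l = (if l = k then a else 0) + (if l = k + 1 then b else 0)
   + (if l = k - 1 then b else 0)"
  unfolding T_def by auto

lemma delta_sum:
  fixes u :: "nat \<Rightarrow> real"
  shows "finite S \<Longrightarrow> (\<Sum>l\<in>S. (if l = x then f else 0) * u l) = (if x \<in> S then f * u x else 0)"
proof -
  assume "finite S"
  have "(\<lambda>l. (if l = x then f else 0) * u l) = (\<lambda>l. if x = l then f * u x else 0)" by auto
  then have "(\<Sum>l\<in>S. (if l = x then f else 0) * u l) = (\<Sum>l\<in>S. if x = l then f * u x else 0)"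
    by (simp only:)
  also have "\<dots> = (if x \<in> S then f * u x else 0)" using \<open>finite S\<close> by (simp add: sum.delta)
  finally show ?thesis .
qed

lemma tri:
  fixes u :: "nat \<Rightarrow> real"
  assumes "1 \<le> k" "k \<le> N - 1" "u 0 = 0" "u N = 0"
  shows "(\<Sum>l = 1..N - 1. T a b k l * u l) = a * u k + b * u (k - 1) + b * u (k + 1)"
proof -
  have "(\<Sum>l = 1..N - 1. T a b k l * u l) =
     (\<Sum>l = 1..N - 1. (if l = k then a else 0) * u l) + (\<Sum>l = 1..N - 1. (if l = k + 1 then b else 0) * u l)
     + (\<Sum>l = 1..N - 1. (if l = k - 1 then b else 0) * u l)"
    using assms(1) unfolding T_split[OF assms(1)] by (simp add: sum.distrib distrib_right)
  also have "\<dots> = a * u k + b * u (k + 1) + b * u (k - 1)"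
  proof -
    have "\<not> k + 1 \<le> N - 1 \<Longrightarrow> u (k + 1) = 0"
    proof -
      assume "\<not> k + 1 \<le> N - 1"
      then have "k + 1 = N" using assms(1,2) by arith
      then show ?thesis using assms(4) by simp
    qed
    then show ?thesis unfolding delta_sum[OF finite_atLeastAtMost] using assms by auto
  qed
  finally show ?thesis by simp
qed

lemma lin2: "(\<Sum>l\<in>A. (a * f l - e * g l) * (U l::real)) = a * (\<Sum>l\<in>A. f l * U l) - e * (\<Sum>l\<in>A. g l * U l)"
  by (simp add: sum_subtractf sum_distrib_left algebra_simps)

lemma lin3: "(\<Sum>l\<in>A. (a * f l + b * g l + e * q l) * (U l::real)) =
   a * (\<Sum>l\<in>A. f l * U l) + b * (\<Sum>l\<in>A. g l * U l) + e * (\<Sum>l\<in>A. q l * U l)"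
  by (simp add: sum.distrib sum_distrib_left algebra_simps)

lemma matvec_T:
  fixes u :: "nat \<Rightarrow> real"
  assumes "1 \<le> k" "k \<le> N - 1" "u 0 = 0" "u N = 0"
    and eig: "\<And>m. 1 \<le> m \<Longrightarrow> u (m - 1) + u (m + 1) = 2 * co * u m"
  shows "(\<Sum>l = 1..N - 1. T a b k l * u l) = (a + 2 * b * co) * u k"
proof -
  have "b * u (k - 1) + b * u (k + 1) = b * (2 * co * u k)"
    using eig[OF assms(1)] by (metis distrib_left)
  then show ?thesis using tri[OF assms(1-4), of a b] by (simp add: algebra_simps)
qed

lemma matvec_S:
  fixes u :: "nat \<Rightarrow> real"
  assumes "1 \<le> k" "k \<le> N - 1" "u 0 = 0" "u N = 0"
    and eig: "\<And>m. 1 \<le> m \<Longrightarrow> u (m - 1) + u (m + 1) = 2 * co * u m"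
  shows "(\<Sum>l = 1..N - 1. (\<Sum>m = 1..N - 1. C * T 2 (-1) l m * T 2 (-1) k m) * u l)
     = C * (2 - 2 * co)^2 * u k"
proof -
  have "(\<Sum>l = 1..N - 1. (\<Sum>m = 1..N - 1. C * T 2 (-1) l m * T 2 (-1) k m) * u l)
      = (\<Sum>m = 1..N - 1. C * T 2 (-1) k m * (\<Sum>l = 1..N - 1. T 2 (-1) m l * u l))"
  proof -
    have "(\<Sum>l = 1..N - 1. (\<Sum>m = 1..N - 1. C * T 2 (-1) l m * T 2 (-1) k m) * u l)
      = (\<Sum>l = 1..N - 1. \<Sum>m = 1..N - 1. C * T 2 (-1) k m * (T 2 (-1) m l * u l))"
      unfolding sum_distrib_right
    proof (intro sum.cong refl)
      fix l m
      show "C * T 2 (-1) l m * T 2 (-1) k m * u l = C * T 2 (-1) k m * (T 2 (-1) m l * u l)"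
        using T_sym[of 2 "-1" l m] by simp
    qed
    also have "\<dots> = (\<Sum>m = 1..N - 1. \<Sum>l = 1..N - 1. C * T 2 (-1) k m * (T 2 (-1) m l * u l))"
      by (rule sum.swap)
    also have "\<dots> = (\<Sum>m = 1..N - 1. C * T 2 (-1) k m * (\<Sum>l = 1..N - 1. T 2 (-1) m l * u l))"
      by (simp add: sum_distrib_left)
    finally show ?thesis .
  qed
  also have "\<dots> = (\<Sum>m = 1..N - 1. C * T 2 (-1) k m * ((2 - 2 * co) * u m))"
    by (intro sum.cong refl) (subst matvec_T[OF _ _ assms(3,4) eig], auto)
  also have "\<dots> = C * (2 - 2 * co) * (\<Sum>m = 1..N - 1. T 2 (-1) k m * u m)"
    by (simp add: sum_distrib_left algebra_simps)
  also have "\<dots> = C * (2 - 2 * co)^2 * u k"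
  proof -
    have "(\<Sum>m = 1..N - 1. T 2 (-1) k m * u m) = (2 - 2 * co) * u k"
      using matvec_T[OF assms, of 2 "-1"] by simp
    then show ?thesis by (simp add: power2_eq_square)
  qed
  finally show ?thesis .
qed


theorem lemma3:
  fixes N j :: nat and etaK etaM alpha c :: real
  assumes "N \<ge> 2"
    and "1 \<le> j" and "j \<le> N - 1"
    and "c > 0"
    and "3 + 18 * etaM - alpha + (alpha - 24 * etaM) * cos (real j * pi * meshsize N)
           + 6 * etaM * cos (2 * (real j * pi * meshsize N)) \<noteq> 0"
  shows "let h = meshsize N; t = real j * pi * h;
             lam = 12 / h^2 * ((1 - 2 * etaK + 2 * etaK * cos t) * (sin (t / 2))^2)
                   / (3 + 18 * etaM - alpha + (alpha - 24 * etaM) * cos t + 6 * etaM * cos (2 * t));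
             U = (\<lambda>k. c * sin (real k * t))
         in \<forall>k \<in> {1..N - 1}.
              matvec N (matKs etaK N) U k = lam * matvec N (matMgsq alpha etaM N) U k"
proof -
  define h where "h = meshsize N"
  define t where "t = real j * pi * h"
  define co where "co = cos t"
  define U where "U = (\<lambda>k::nat. c * sin (real k * t))"
  define D where "D = 3 + 18 * etaM - alpha + (alpha - 24 * etaM) * cos t + 6 * etaM * cos (2 * t)"
  have hpos: "h > 0" using assms(1) by (simp add: h_def meshsize_def)
  have Dnz: "D \<noteq> 0" using assms(5) by (simp add: D_def t_def h_def)
  have U0: "U 0 = 0" by (simp add: U_def)
  have "real N * t = real j * pi" using assms(1) by (simp add: t_def h_def meshsize_def)
  then have UN: "U N = 0" by (simp add: U_def)
  have eig: "U (m - 1) + U (m + 1) = 2 * co * U m" if "1 \<le> m" for m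
  proof -
    have "real (m - 1) * t = real m * t - t" using that by (simp add: of_nat_diff algebra_simps)
    moreover have "real (m + 1) * t = real m * t + t" by (simp add: algebra_simps)
    ultimately have "U (m - 1) + U (m + 1) = c * sin (real m * t - t) + c * sin (real m * t + t)"
      by (simp only: U_def)
    also have "\<dots> = 2 * co * U m" by (simp add: U_def co_def sin_diff sin_add algebra_simps)
    finally show ?thesis .
  qed
  have hj: "hat_jump N l m = (1/h) * T 2 (-1) l m" for l m
    by (simp add: hat_jump_def T_def h_def)
  have K: "stiffK N k l = (1/h) * T 2 (-1) k l" for k l
    by (simp add: stiffK_def T_def h_def)
  have G: "massG N k l = h * T (2/3) (1/6) k l" for k l
    by (simp add: massG_def T_def h_def)
  have L: "massL N k l = h * T 1 0 k l" for k l
    by (simp add: massL_def T_def h_def)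
  have S: "stabS N k l = (\<Sum>m = 1..N - 1. (h * (1/h) * (1/h)) * T 2 (-1) l m * T 2 (-1) k m)" for k l
    unfolding stabS_def hj h_def[symmetric] by (simp add: mult_ac)
  have Sg: "stabSg N k l = (\<Sum>m = 1..N - 1. (h^3 * (1/h) * (1/h)) * T 2 (-1) l m * T 2 (-1) k m)" for k l
    unfolding stabSg_def hj h_def[symmetric] by (simp add: mult_ac)
  have main: "matvec N (matKs etaK N) U k = 12 / h^2 * ((1 - 2 * etaK + 2 * etaK * cos t) * (sin (t / 2))^2) / D
     * matvec N (matMgsq alpha etaM N) U k" if k: "1 \<le> k" "k \<le> N - 1" for k
  proof -
    have T1: "(\<Sum>l = 1..N - 1. T a b k l * U l) = (a + 2 * b * co) * U k" for a b
      by (rule matvec_T[OF k U0 UN eig])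
    have S1: "(\<Sum>l = 1..N - 1. (\<Sum>m = 1..N - 1. C * T 2 (-1) l m * T 2 (-1) k m) * U l)
     = C * (2 - 2 * co)^2 * U k" for C
      by (rule matvec_S[OF k U0 UN eig])
    have lhs: "matvec N (matKs etaK N) U k = (1/h) * ((2 - 2 * co) * U k) - etaK * ((h * (1/h) * (1/h)) * (2 - 2 * co)^2 * U k)"
    proof -
      have "matvec N (matKs etaK N) U k = (1/h) * (\<Sum>l = 1..N - 1. T 2 (-1) k l * U l)
          - etaK * (\<Sum>l = 1..N - 1. (\<Sum>m = 1..N - 1. (h * (1/h) * (1/h)) * T 2 (-1) l m * T 2 (-1) k m) * U l)"
        unfolding matvec_def matKs_def K lin2 S ..
      then show ?thesis unfolding T1 S1 by simp
    qed
    have rhs: "matvec N (matMgsq alpha etaM N) U k = alpha * (h * ((2/3 + 2 * (1/6) * co) * U k))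
        + (1 - alpha) * (h * ((1 + 2 * 0 * co) * U k)) + etaM * ((h^3 * (1/h) * (1/h)) * (2 - 2 * co)^2 * U k)"
    proof -
      have "matvec N (matMgsq alpha etaM N) U k = alpha * (h * (\<Sum>l = 1..N - 1. T (2/3) (1/6) k l * U l))
          + (1 - alpha) * (h * (\<Sum>l = 1..N - 1. T 1 0 k l * U l))
          + etaM * (\<Sum>l = 1..N - 1. (\<Sum>m = 1..N - 1. (h^3 * (1/h) * (1/h)) * T 2 (-1) l m * T 2 (-1) k m) * U l)"
        unfolding matvec_def matMgsq_def G L lin3 Sg by (simp add: sum_distrib_left mult.assoc)
      then show ?thesis unfolding T1 S1 by simp
    qed
    have s2: "(sin (t / 2))^2 = (1 - co) / 2"
      using cos_double_sin[of "t/2"] by (simp add: co_def)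
    have c2: "cos (2 * t) = 2 * co^2 - 1" by (simp add: co_def cos_double_cos)
    have D': "D = 3 + 18 * etaM - alpha + (alpha - 24 * etaM) * co + 6 * etaM * (2 * co^2 - 1)"
      by (simp add: D_def c2 co_def)
    have L: "matvec N (matKs etaK N) U k = (2 - 2 * co) / h * (1 - 2 * etaK + 2 * etaK * co) * U k"
      unfolding lhs using hpos by (simp add: field_simps power2_eq_square)
    have M: "matvec N (matMgsq alpha etaM N) U k = h * D / 3 * U k"
      unfolding rhs D' using hpos by (simp add: field_simps power2_eq_square power3_eq_cube)
    show ?thesis unfolding L M s2 co_def[symmetric]
      using hpos Dnz by (simp add: field_simps power2_eq_square)
  qed
  show ?thesis unfolding Let_def h_def[symmetric] t_def[symmetric] U_def[symmetric] D_def[symmetric]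
    using main by auto
qed

end
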